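(* Assume $f$ is twice continuously differentiable on $(0,\infty)$. Define $S$ on probability vectors $q$ on $\hat{\mathcal X}$ implicitly by $$S[q](i)=q(i)\sum_x\frac{p(x)A_q(x,i)}{\sum_kq(k)A_q(x,k)},\qquad A_q(x,i)=\exp\{-s_1d(x,i)-s_2g(p,S[q],i)\},$$ with $g(p,r,i)=f\big(\tfrac{p(i)}{r(i)}\big)-\tfrac{p(i)}{r(i)}f'\big(\tfrac{p(i)}{r(i)}\big)$. Let $q^*$ be a fixed point of $S$ achieving the RDPF, and let $A=A_{q^*}$. Let $J(q^* )$ be the Jacobian matrix of $S$ at $q^*$, with entries $J_{ij}=\partial S[q](i)/\partial q(j)$. Then $$J(q^* )=(I-M)(I-\Gamma J(q^* )),$$ where $$M_{ij}=q^*(i)\sum_xp(x)\frac{A(x,i)A(x,j)}{\big(\sum_kq^*(k)A(x,k)\big)^2},\qquad \Gamma=s_2\,\mathrm{diag}\Big[q^*(i)\frac{\partial^2}{\partial q(i)^2}D_f(p\|q)\Big|_{q=q^*}\Big]_i.$$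
   Context: Finite alphabets $\mathcal X=\hat{\mathcal X}$. The source distribution is $p$, $d\ge0$ is a distortion, and $s_1,s_2\ge0$ are multipliers. $f:(0,\infty)\to\mathbb R$ is convex with $f(1)=0$, and $D_f(p\|q)=\sum_xq(x)f(p(x)/q(x))$. $S$ is the update map of the exact alternating minimization iteration $q^{(n+1)}=S[q^{(n)}]$ for the rate-distortion-perception problem $\min_QI(p,Q)$ subject to $\mathbb E[d]\le D$ and $D_f(p\|q_Q)\le P$. *)

theory Defs
  imports "HOL-Analysis.Analysis"
begin

definition Df :: "(real \<Rightarrow> real) \<Rightarrow> ('a::finite \<Rightarrow> real) \<Rightarrow> ('a \<Rightarrow> real) \<Rightarrow> real" where
  "Df f p q = (\<Sum>x\<in>UNIV. q x * f (p x / q x))"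

definition gfun :: "(real \<Rightarrow> real) \<Rightarrow> ('a \<Rightarrow> real) \<Rightarrow> ('a \<Rightarrow> real) \<Rightarrow> 'a \<Rightarrow> real" where
  "gfun f p r i = f (p i / r i) - p i / r i * deriv f (p i / r i)"

text \<open>A(x,i) = exp(-s1 d(x,i) - s2 g(p,r,i)) where r = S[q].\<close>
definition Afun :: "(real \<Rightarrow> real) \<Rightarrow> ('a \<Rightarrow> real) \<Rightarrow> ('a \<Rightarrow> 'a \<Rightarrow> real) \<Rightarrow> real \<Rightarrow> real
    \<Rightarrow> ('a \<Rightarrow> real) \<Rightarrow> 'a \<Rightarrow> 'a \<Rightarrow> real" where
  "Afun f p d s1 s2 r x i = exp (- s1 * d x i - s2 * gfun f p r i)"

text \<open>The matrix M at q* (with A = A_{q*}, i.e. built from S[q*]).\<close>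
definition Mmat :: "(real \<Rightarrow> real) \<Rightarrow> ('a::finite \<Rightarrow> real) \<Rightarrow> ('a \<Rightarrow> 'a \<Rightarrow> real) \<Rightarrow> real \<Rightarrow> real
    \<Rightarrow> ('a \<Rightarrow> real) \<Rightarrow> real^'a \<Rightarrow> real^'a^'a" where
  "Mmat f p d s1 s2 r qs = (\<chi> i j. qs$i * (\<Sum>x\<in>UNIV. p x * Afun f p d s1 s2 r x i * Afun f p d s1 s2 r x j
        / (\<Sum>k\<in>UNIV. qs$k * Afun f p d s1 s2 r x k)^2))"

definition Gam :: "(real \<Rightarrow> real) \<Rightarrow> ('a::finite \<Rightarrow> real) \<Rightarrow> real \<Rightarrow> real^'a \<Rightarrow> real^'a^'a" where
  "Gam f p s2 qs = (\<chi> i j. if i = j then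
      s2 * (qs$i * deriv (\<lambda>t. deriv (\<lambda>u. Df f p (\<lambda>k. if k = i then u else qs$k)) t) (qs$i))
    else 0)"

definition is_channel :: "('a::finite \<Rightarrow> 'a \<Rightarrow> real) \<Rightarrow> bool" where
  "is_channel Q \<longleftrightarrow> (\<forall>x y. 0 \<le> Q x y) \<and> (\<forall>x. (\<Sum>y\<in>UNIV. Q x y) = 1)"

definition out_marg :: "('a::finite \<Rightarrow> real) \<Rightarrow> ('a \<Rightarrow> 'a \<Rightarrow> real) \<Rightarrow> 'a \<Rightarrow> real" where
  "out_marg p Q y = (\<Sum>x\<in>UNIV. p x * Q x y)"

definition mutual_info :: "('a::finite \<Rightarrow> real) \<Rightarrow> ('a \<Rightarrow> 'a \<Rightarrow> real) \<Rightarrow> real" where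
  "mutual_info p Q = (\<Sum>x\<in>UNIV. \<Sum>y\<in>UNIV.
     (if p x * Q x y = 0 then 0 else p x * Q x y * ln (Q x y / out_marg p Q y)))"

definition exp_dist :: "('a::finite \<Rightarrow> real) \<Rightarrow> ('a \<Rightarrow> 'a \<Rightarrow> real) \<Rightarrow> ('a \<Rightarrow> 'a \<Rightarrow> real) \<Rightarrow> real" where
  "exp_dist p Q d = (\<Sum>x\<in>UNIV. \<Sum>y\<in>UNIV. p x * Q x y * d x y)"

definition rdp_feasible where
  "rdp_feasible f p d D P Q \<longleftrightarrow> is_channel Q \<and> exp_dist p Q d \<le> D \<and> Df f p (out_marg p Q) \<le> P"

definition achieves_RDPF :: "(real \<Rightarrow> real) \<Rightarrow> ('a::finite \<Rightarrow> real) \<Rightarrow> ('a \<Rightarrow> 'a \<Rightarrow> real) \<Rightarrow> ('a \<Rightarrow> real) \<Rightarrow> bool" where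
  "achieves_RDPF f p d q \<longleftrightarrow> (\<exists>D P Q. rdp_feasible f p d D P Q
      \<and> (\<forall>Q'. rdp_feasible f p d D P Q' \<longrightarrow> mutual_info p Q \<le> mutual_info p Q')
      \<and> out_marg p Q = q)"

end

theory Submission
  imports Defs
begin

lemma G_diff:
  fixes f :: "real \<Rightarrow> real"
  assumes f_diff: "\<forall>t>0. f differentiable (at t)"
    and f'_diff: "\<forall>t>0. deriv f differentiable (at t)"
    and a: "0 < a" and r: "0 < r"
  shows "(\<lambda>r. f (a / r) - a / r * deriv f (a / r)) differentiable (at r)"
proof -
  have ar: "0 < a / r" using a r by simp
  have d1: "(\<lambda>r. a / r) differentiable (at r)"
    using r by (auto intro!: derivative_intros)
  have "((\<lambda>r. f r) \<circ> (\<lambda>r. a / r)) differentiable (at r)"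
    by (rule differentiable_chain_at[OF d1]) (use f_diff ar in auto)
  moreover have "((\<lambda>r. deriv f r) \<circ> (\<lambda>r. a / r)) differentiable (at r)"
    by (rule differentiable_chain_at[OF d1]) (use f'_diff ar in auto)
  ultimately show ?thesis using d1 unfolding o_def
    by (intro differentiable_diff differentiable_mult) auto
qed

lemma Df_deriv:
  fixes f :: "real \<Rightarrow> real" and p :: "'a::finite \<Rightarrow> real"
  assumes f_diff: "\<forall>t>0. f differentiable (at t)"
    and a: "0 < p i" and u: "0 < u"
  shows "((\<lambda>u. Df f p (\<lambda>k. if k = i then u else qs k)) has_real_derivative
           (f (p i / u) - p i / u * deriv f (p i / u))) (at u)"
proof -
  define C where "C = (\<Sum>k\<in>UNIV - {i}. qs k * f (p k / qs k))"
  have eq: "Df f p (\<lambda>k. if k = i then v else qs k) = v * f (p i / v) + C" for v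
    unfolding Df_def C_def
    by (subst sum.remove[of UNIV i]) (auto intro!: sum.cong)
  have fd: "(f has_real_derivative deriv f (p i / u)) (at (p i / u))"
    using f_diff a u by (simp add: DERIV_deriv_iff_real_differentiable)
  have "((\<lambda>v. v * f (p i / v) + C) has_real_derivative
           (f (p i / u) - p i / u * deriv f (p i / u))) (at u)"
  proof -
    have dq: "((\<lambda>v. p i / v) has_real_derivative (- (p i) / u^2)) (at u)"
      using u by (auto intro!: derivative_eq_intros simp: field_simps power2_eq_square)
    have "((\<lambda>v. f (p i / v)) has_real_derivative deriv f (p i / u) * (- (p i) / u^2)) (at u)"
      by (rule DERIV_chain2[OF fd dq])
    note fc = this
    have "((\<lambda>v. v * f (p i / v) + C) has_real_derivative
           1 * f (p i / u) + (deriv f (p i / u) * (- (p i) / u^2)) * u + 0) (at u)"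
      by (rule DERIV_add[OF DERIV_mult[OF DERIV_ident fc] DERIV_const])
    moreover have "1 * f (p i / u) + (deriv f (p i / u) * (- (p i) / u^2)) * u + 0
        = f (p i / u) - p i / u * deriv f (p i / u)"
      using u by (simp add: field_simps power2_eq_square)
    ultimately show ?thesis by simp
  qed
  then show ?thesis by (simp add: eq)
qed

lemma Gam_lemma:
  fixes f :: "real \<Rightarrow> real" and p :: "'a::finite \<Rightarrow> real"
  assumes f_diff: "\<forall>t>0. f differentiable (at t)"
    and f'_diff: "\<forall>t>0. deriv f differentiable (at t)"
    and a: "0 < p i" and q: "0 < qs$i"
  shows "deriv (\<lambda>t. deriv (\<lambda>u. Df f p (\<lambda>k. if k = i then u else qs$k)) t) (qs$i)
      = deriv (\<lambda>r. f (p i / r) - p i / r * deriv f (p i / r)) (qs$i)"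
    and "((\<lambda>r. f (p i / r) - p i / r * deriv f (p i / r)) has_real_derivative
      deriv (\<lambda>r. f (p i / r) - p i / r * deriv f (p i / r)) (qs$i)) (at (qs$i))"
proof -
  define G where "G = (\<lambda>r. f (p i / r) - p i / r * deriv f (p i / r))"
  have DG: "(G has_real_derivative deriv G (qs$i)) (at (qs$i))"
    unfolding DERIV_deriv_iff_real_differentiable G_def
    by (rule G_diff[OF f_diff f'_diff a q])
  have eqo: "G t = deriv (\<lambda>u. Df f p (\<lambda>k. if k = i then u else qs$k)) t" if "t \<in> {0<..}" for t
    unfolding G_def using that
    by (intro DERIV_imp_deriv[symmetric] Df_deriv[where qs="\<lambda>k. qs$k" and p=p and i=i, OF f_diff a]) auto
  have "((\<lambda>t. deriv (\<lambda>u. Df f p (\<lambda>k. if k = i then u else qs$k)) t) has_real_derivative deriv G (qs$i)) (at (qs$i))"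
    by (rule has_field_derivative_transform_within_open[OF DG open_greaterThan _ eqo]) (use q in auto)
  then show "deriv (\<lambda>t. deriv (\<lambda>u. Df f p (\<lambda>k. if k = i then u else qs$k)) t) (qs$i)
      = deriv (\<lambda>r. f (p i / r) - p i / r * deriv f (p i / r)) (qs$i)"
    unfolding G_def[symmetric] by (rule DERIV_imp_deriv)
  show "((\<lambda>r. f (p i / r) - p i / r * deriv f (p i / r)) has_real_derivative
      deriv (\<lambda>r. f (p i / r) - p i / r * deriv f (p i / r)) (qs$i)) (at (qs$i))"
    using DG unfolding G_def .
qed

theorem theorem5:
  fixes f :: "real \<Rightarrow> real" and p :: "'a::finite \<Rightarrow> real" and d :: "'a \<Rightarrow> 'a \<Rightarrow> real"
    and s1 s2 :: real and S :: "real^'a \<Rightarrow> real^'a" and qs :: "real^'a"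
    and U :: "(real^'a) set" and S' :: "real^'a \<Rightarrow> real^'a"
  assumes f_convex: "convex_on {0<..} f" and f1: "f 1 = 0"
    and f_diff: "\<forall>t>0. f differentiable (at t)"
    and f'_diff: "\<forall>t>0. deriv f differentiable (at t)"
    and f''_cont: "continuous_on {0<..} (deriv (deriv f))"
    and p_pos: "\<forall>x. 0 < p x" and p_sum: "(\<Sum>x\<in>UNIV. p x) = 1"
    and d_nonneg: "\<forall>x y. 0 \<le> d x y" and s1: "0 \<le> s1" and s2: "0 \<le> s2"
    and qs_pos: "\<forall>i. 0 < qs$i" and qs_sum: "(\<Sum>i\<in>UNIV. qs$i) = 1"
    and U: "open U" "qs \<in> U"
    and S_def: "\<forall>q\<in>U. \<forall>i. S q $ i = q$i * (\<Sum>x\<in>UNIV. p x * Afun f p d s1 s2 (($) (S q)) x i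
                     / (\<Sum>k\<in>UNIV. q$k * Afun f p d s1 s2 (($) (S q)) x k))"
    and fixed: "S qs = qs"
    and rdpf: "achieves_RDPF f p d (($) qs)"
    and jac: "(S has_derivative S') (at qs)"
  shows "matrix S' = (mat 1 - Mmat f p d s1 s2 (($) (S qs)) qs) ** (mat 1 - Gam f p s2 qs ** matrix S')"
proof -
  define G where "G = (\<lambda>k r. f (p k / r) - p k / r * deriv f (p k / r))"
  define \<gamma> where "\<gamma> = (\<lambda>k. deriv (G k) (qs$k))"
  define A where "A = (\<lambda>q x k. Afun f p d s1 s2 (($) (S q)) x k)"
  define a where "a = (\<lambda>x k. A qs x k)"
  define Z where "Z = (\<lambda>x. \<Sum>k\<in>UNIV. qs$k * a x k)"
  define J where "J = matrix S'"
  define dA where "dA = (\<lambda>x k h. - (s2 * \<gamma> k * a x k) * (S' h $ k))"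
  define dZ where "dZ = (\<lambda>x h. \<Sum>k\<in>UNIV. h$k * a x k + qs$k * dA x k h)"
  have Aeq: "A q x k = exp (- s1 * d x k - s2 * G k (S q $ k))" for q x k
    by (simp add: A_def Afun_def gfun_def G_def)
  have Zeq: "Z x = (\<Sum>k\<in>UNIV. qs$k * A qs x k)" for x by (simp add: Z_def a_def)
  have a_pos: "0 < a x k" for x k by (simp add: a_def Aeq)
  have Z_pos: "0 < Z x" for x
    unfolding Z_def using a_pos qs_pos
    by (intro sum_pos) (auto intro: mult_pos_pos)
  have DG: "(G k has_real_derivative \<gamma> k) (at (qs$k))" for k
    unfolding G_def \<gamma>_def using Gam_lemma(2)[OF f_diff f'_diff, of p k qs] p_pos qs_pos by auto
  have GamE: "Gam f p s2 qs $ k $ l = (if k = l then s2 * (qs$k * \<gamma> k) else 0)" for k l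
    unfolding Gam_def \<gamma>_def G_def using Gam_lemma(1)[OF f_diff f'_diff, of p k qs] p_pos qs_pos by auto
  have hSk: "((\<lambda>q. S q $ k) has_derivative (\<lambda>h. S' h $ k)) (at qs)" for k
    using has_derivative_compose[OF jac bounded_linear_imp_has_derivative[OF bounded_linear_vec_nth[of k]]] .
  have hGk: "((\<lambda>q. G k (S q $ k)) has_derivative (\<lambda>h. \<gamma> k * (S' h $ k))) (at qs)" for k
    using has_derivative_compose[OF hSk, of "G k" "(*) (\<gamma> k)"] DG[of k]
    by (simp add: fixed has_field_derivative_def)
  have hA: "((\<lambda>q. A q x k) has_derivative dA x k) (at qs)" for x k
  proof -
    have inner: "((\<lambda>q. - s1 * d x k - s2 * G k (S q $ k)) has_derivative (\<lambda>h. - (s2 * (\<gamma> k * (S' h $ k))))) (at qs)"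
      by (rule has_derivative_eq_rhs, (rule derivative_intros hGk)+) auto
    have "((\<lambda>q. exp (- s1 * d x k - s2 * G k (S q $ k))) has_derivative
        (\<lambda>h. exp (- s1 * d x k - s2 * G k (S qs $ k)) * (- (s2 * (\<gamma> k * (S' h $ k)))))) (at qs)"
      using has_derivative_compose[OF inner, of exp "(*) (exp (- s1 * d x k - s2 * G k (S qs $ k)))"]
        DERIV_exp[of "- s1 * d x k - s2 * G k (S qs $ k)"]
      by (simp add: has_field_derivative_def)
    then show ?thesis
      unfolding Aeq[symmetric] dA_def a_def by (rule has_derivative_eq_rhs) (auto simp: fun_eq_iff)
  qed
  have hZ: "((\<lambda>q. \<Sum>k\<in>UNIV. q$k * A q x k) has_derivative dZ x) (at qs)" for x
    unfolding dZ_def a_def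
    by (rule has_derivative_eq_rhs, (rule derivative_intros hA bounded_linear_imp_has_derivative[OF bounded_linear_vec_nth])+) (simp add: fun_eq_iff add.commute)
  have fixp: "(\<Sum>x\<in>UNIV. p x * a x i / Z x) = 1" for i
  proof -
    have "S qs $ i = qs$i * (\<Sum>x\<in>UNIV. p x * a x i / Z x)"
      using S_def[rule_format, OF U(2), of i] unfolding a_def A_def Z_def .
    then have "qs$i = qs$i * (\<Sum>x\<in>UNIV. p x * a x i / Z x)"
      by (simp only: fixed)
    then show ?thesis using qs_pos[rule_format, of i] by simp
  qed
  have E: "S' h $ i = h$i * (\<Sum>x\<in>UNIV. p x * a x i / Z x)
      + qs$i * (\<Sum>x\<in>UNIV. p x * (dA x i h * Z x - a x i * dZ x h) / (Z x)^2)" for h i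
  proof -
    have d1: "((\<lambda>q. q$i * (\<Sum>x\<in>UNIV. p x * A q x i / (\<Sum>k\<in>UNIV. q$k * A q x k))) has_derivative
       (\<lambda>h. h$i * (\<Sum>x\<in>UNIV. p x * a x i / Z x)
      + qs$i * (\<Sum>x\<in>UNIV. p x * (dA x i h * Z x - a x i * dZ x h) / (Z x)^2))) (at qs)"
    proof -
      have qx: "((\<lambda>q. A q x i / (\<Sum>k\<in>UNIV. q$k * A q x k)) has_derivative
          (\<lambda>h. (dA x i h * Z x - a x i * dZ x h) / (Z x * Z x))) (at qs)" for x
        using has_derivative_divide'[OF hA[of x i] hZ[of x]] Z_pos[of x]
        by (simp add: Zeq a_def)
      have px: "((\<lambda>q. p x * A q x i / (\<Sum>k\<in>UNIV. q$k * A q x k)) has_derivative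
          (\<lambda>h. p x * ((dA x i h * Z x - a x i * dZ x h) / (Z x * Z x)))) (at qs)" for x
        using has_derivative_mult_right[OF qx[of x], of "p x"] by (simp add: times_divide_eq_right)
      have sx: "((\<lambda>q. \<Sum>x\<in>UNIV. p x * A q x i / (\<Sum>k\<in>UNIV. q$k * A q x k)) has_derivative
          (\<lambda>h. \<Sum>x\<in>UNIV. p x * ((dA x i h * Z x - a x i * dZ x h) / (Z x * Z x)))) (at qs)"
        by (rule has_derivative_sum[OF px])
      have vi: "((\<lambda>q. q$i) has_derivative (\<lambda>h. h$i)) (at qs)"
        by (rule bounded_linear_imp_has_derivative[OF bounded_linear_vec_nth])
      have "(\<lambda>q. \<Sum>x\<in>UNIV. p x * A q x i / (\<Sum>k\<in>UNIV. q$k * A q x k)) qs = (\<Sum>x\<in>UNIV. p x * a x i / Z x)"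
        by (simp add: a_def Z_def)
      then show ?thesis
        using has_derivative_mult[OF vi sx]
        by (simp add: power2_eq_square times_divide_eq_right add.commute mult.commute)
    qed
    have eqU: "q$i * (\<Sum>x\<in>UNIV. p x * A q x i / (\<Sum>k\<in>UNIV. q$k * A q x k)) = S q $ i" if "q \<in> U" for q
      using S_def[rule_format, OF that, of i] unfolding A_def by (rule sym)
    have d2: "((\<lambda>q. S q $ i) has_derivative
       (\<lambda>h. h$i * (\<Sum>x\<in>UNIV. p x * a x i / Z x)
      + qs$i * (\<Sum>x\<in>UNIV. p x * (dA x i h * Z x - a x i * dZ x h) / (Z x)^2))) (at qs)"
      by (rule has_derivative_transform_within_open[OF d1 U]) (rule eqU)
    show ?thesis using has_derivative_unique[OF hSk[of i] d2] by (auto simp: fun_eq_iff)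
  qed
  have ifz: "\<And>P x y. (if P then x else 0) * y = (if P then x * y else (0::real))" by simp
  define c where "c = (\<lambda>k. s2 * qs$k * \<gamma> k)"
  define m where "m = (\<lambda>i k. qs$i * (\<Sum>x\<in>UNIV. p x * a x i * a x k / (Z x)^2))"
  have Mm: "Mmat f p d s1 s2 (($) (S qs)) qs $ i $ k = m i k" for i k
    by (simp add: Mmat_def m_def a_def A_def Z_def)
  have Gc: "(Gam f p s2 qs ** J) $ k $ j = c k * J$k$j" for k j
    by (simp add: matrix_matrix_mult_def GamE c_def mult.assoc ifz)
  have Gc': "(\<Sum>l\<in>UNIV. Gam f p s2 qs $ k $ l * J $ l $ j) = c k * J$k$j" for k j
    using Gc[of k j] by (simp add: matrix_matrix_mult_def)
  have Jax: "S' (axis j 1) $ k = J$k$j" for k j by (simp add: J_def matrix_def)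
  have L: "J$i$j = (if i = j then 1 else 0) - c i * J$i$j - m i j + (\<Sum>k\<in>UNIV. m i k * (c k * J$k$j))" for i j
  proof -
    define e where "e = axis j (1::real)"
    have ek: "e$k = (if k = j then 1 else 0)" for k by (simp add: e_def axis_def)
    have dAe: "dA x k e = - (s2 * \<gamma> k * a x k) * J$k$j" for x k
      by (simp add: dA_def e_def Jax)
    define Sx where "Sx = (\<lambda>x. \<Sum>k\<in>UNIV. qs$k * dA x k e)"
    have dZe: "dZ x e = a x j + Sx x" for x
      by (simp add: dZ_def Sx_def sum.distrib ek ifz)
    have Sxe: "(\<Sum>k\<in>UNIV. (p x * a x i * a x k / (Z x)^2) * (c k * J$k$j)) = - p x * a x i * Sx x / (Z x)^2" for x
      unfolding Sx_def sum_distrib_left sum_divide_distrib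
      by (simp add: sum_negf[symmetric] dAe c_def) (intro sum.cong refl, simp add: field_simps)
    have T: "p x * (dA x i e * Z x - a x i * dZ x e) / (Z x)^2
       = - (s2 * \<gamma> i * J$i$j) * (p x * a x i / Z x) - p x * a x i * a x j / (Z x)^2
         + (\<Sum>k\<in>UNIV. (p x * a x i * a x k / (Z x)^2) * (c k * J$k$j))" for x
      using Z_pos[of x] unfolding Sxe dZe dAe by (simp add: field_simps power2_eq_square)
    have "J$i$j = e$i * (\<Sum>x\<in>UNIV. p x * a x i / Z x)
      + qs$i * (\<Sum>x\<in>UNIV. p x * (dA x i e * Z x - a x i * dZ x e) / (Z x)^2)"
      using E[of e i] by (simp add: Jax e_def)
    also have "\<dots> = e$i + qs$i * (- (s2 * \<gamma> i * J$i$j) * 1 - (\<Sum>x\<in>UNIV. p x * a x i * a x j / (Z x)^2)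
         + (\<Sum>k\<in>UNIV. (\<Sum>x\<in>UNIV. p x * a x i * a x k / (Z x)^2) * (c k * J$k$j)))"
      unfolding T fixp sum.distrib sum_subtractf sum_distrib_left[symmetric] sum_distrib_right
      by (subst sum.swap) simp
    also have "\<dots> = (if i = j then 1 else 0) - c i * J$i$j - m i j + (\<Sum>k\<in>UNIV. m i k * (c k * J$k$j))"
      unfolding m_def c_def ek sum_distrib_left by (simp add: algebra_simps sum_distrib_left)
    finally show ?thesis .
  qed
  show ?thesis
    unfolding J_def[symmetric]
  proof (simp add: vec_eq_iff, intro allI)
    fix i j
    have "((mat 1 - Mmat f p d s1 s2 (($) (S qs)) qs) ** (mat 1 - Gam f p s2 qs ** J)) $ i $ j
      = (\<Sum>k\<in>UNIV. ((if i = k then 1 else 0) - m i k) * ((if k = j then 1 else 0) - c k * J$k$j))"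
      by (simp add: matrix_matrix_mult_def Mm Gc' mat_def)
    also have "\<dots> = (if i = j then 1 else 0) - c i * J$i$j - m i j + (\<Sum>k\<in>UNIV. m i k * (c k * J$k$j))"
    proof -
      have pw: "((if i = k then 1 else 0) - m i k) * ((if k = j then 1 else 0) - c k * J$k$j)
        = (if i = k then (if k = j then 1 else 0) else 0) - (if i = k then c k * J$k$j else 0)
          - (if k = j then m i k else 0) + m i k * (c k * J$k$j)" for k
        by (auto simp: algebra_simps)
      show ?thesis unfolding pw by (simp add: sum.distrib sum_subtractf)
    qed
    finally show "J $ i $ j = ((mat 1 - Mmat f p d s1 s2 (($) (S qs)) qs) ** (mat 1 - Gam f p s2 qs ** J)) $ i $ j"
      using L[of i j] by simp
  qed
qed

end
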